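(* Let $p_1,p_2\in\mathcal{P}_{KZ}$ be transcendental periods with $\deg(p_1)\neq\deg(p_2)$. Then $p_1+p_2$ is a transcendental number.
   Context: $\mathbb{R}_{\mathrm{alg}}=\mathbb{R}\cap\overline{\mathbb{Q}}$. Semialgebraic subsets of $\mathbb{R}^n$ are finite unions of finite intersections of sets $\{f=0\}$, $\{g>0\}$ with $f,g\in\mathbb{R}_{\mathrm{alg}}[T_1,\dots,T_n]$; $\mathcal{SA}^n$ denotes those with nonempty interior. A period is a real number $\int_X (P/Q)(x)\,dx$ (absolutely convergent) with $X\in\mathcal{SA}^n$, $P,Q\in\mathbb{R}_{\mathrm{alg}}[T_1,\dots,T_n]$, $Q$ not identically zero on $X$; $\mathcal{P}_{KZ}$ is the set of periods. For a nonzero period $p$ there exists a positive integer $k$ and a compact $K\in\mathcal{SA}^k$ with $|p|=\mathrm{vol}_k(K)$; $\deg(p)$ is the smallest such $k$, and $\deg(0)=0$. *)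

theory Defs
  imports "HOL-Analysis.Analysis" "HOL-Computational_Algebra.Polynomial"
begin

text \<open>Points of R^n are represented as extensional functions nat => real
  supported on the coordinates {..<n}; R^n is the space of the product measure
  of n copies of Lebesgue--Borel measure.\<close>

definition Rn :: "nat \<Rightarrow> (nat \<Rightarrow> real) set" where
  "Rn n = {..<n} \<rightarrow>\<^sub>E (UNIV :: real set)"

definition lebn :: "nat \<Rightarrow> (nat \<Rightarrow> real) measure" where
  "lebn n = PiM {..<n} (\<lambda>_. lborel)"

definition Ralg :: "real set" where
  "Ralg = {x. algebraic x}"

text \<open>Polynomial functions in the variables T_1..T_n (coordinates 0..n-1) with
  coefficients in R_alg, given as a finite list of (exponent vector, coefficient).\<close>
definition alg_poly :: "nat \<Rightarrow> ((nat \<Rightarrow> real) \<Rightarrow> real) \<Rightarrow> bool" where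
  "alg_poly n f \<longleftrightarrow> (\<exists>ms :: ((nat \<Rightarrow> nat) \<times> real) list.
      (\<forall>(\<alpha>, c) \<in> set ms. c \<in> Ralg) \<and>
      (\<forall>x. f x = (\<Sum>(\<alpha>, c) \<leftarrow> ms. c * (\<Prod>i<n. x i ^ \<alpha> i))))"

inductive semialg :: "nat \<Rightarrow> (nat \<Rightarrow> real) set \<Rightarrow> bool" for n where
  eq:  "alg_poly n f \<Longrightarrow> semialg n {x \<in> Rn n. f x = 0}"
| pos: "alg_poly n g \<Longrightarrow> semialg n {x \<in> Rn n. g x > 0}"
| un:  "semialg n A \<Longrightarrow> semialg n B \<Longrightarrow> semialg n (A \<union> B)"
| int: "semialg n A \<Longrightarrow> semialg n B \<Longrightarrow> semialg n (A \<inter> B)"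

definition nonempty_interior :: "nat \<Rightarrow> (nat \<Rightarrow> real) set \<Rightarrow> bool" where
  "nonempty_interior n S \<longleftrightarrow>
     (\<exists>x \<in> S. \<exists>e > 0. \<forall>y \<in> Rn n. (\<forall>i<n. \<bar>y i - x i\<bar> < e) \<longrightarrow> y \<in> S)"

definition SA :: "nat \<Rightarrow> (nat \<Rightarrow> real) set set" where
  "SA n = {S. semialg n S \<and> nonempty_interior n S}"

definition is_period :: "real \<Rightarrow> bool" where
  "is_period p \<longleftrightarrow> (\<exists>n X P Q. n \<ge> 1 \<and> X \<in> SA n \<and> alg_poly n P \<and> alg_poly n Q \<and>
      (\<exists>x \<in> X. Q x \<noteq> 0) \<and>
      set_integrable (lebn n) X (\<lambda>x. P x / Q x) \<and>
      p = (LINT x : X | lebn n. P x / Q x))"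

definition PKZ :: "real set" where
  "PKZ = {p. is_period p}"

definition period_deg :: "real \<Rightarrow> nat" where
  "period_deg p = (if p = 0 then 0 else
     (LEAST k. k > 0 \<and> (\<exists>K. K \<in> SA k \<and> compact K \<and> \<bar>p\<bar> = measure (lebn k) K)))"

end

theory Submission
  imports Defs "HOL-Computational_Algebra.Polynomial"
begin

definition polyfun :: "nat \<Rightarrow> ((nat \<Rightarrow> real) \<Rightarrow> real) \<Rightarrow> bool" where
  "polyfun n f \<longleftrightarrow> (\<exists>ms :: ((nat \<Rightarrow> nat) \<times> real) list.
      (\<forall>x. f x = (\<Sum>(\<alpha>, c) \<leftarrow> ms. c * (\<Prod>i<n. x i ^ \<alpha> i))))"

lemma alg_poly_polyfun: "alg_poly n f \<Longrightarrow> polyfun n f"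
  unfolding alg_poly_def polyfun_def by blast

lemma space_lebn: "space (lebn n) = Rn n"
  unfolding lebn_def Rn_def by (simp add: space_PiM)

lemma polysum_measurable:
  "(\<lambda>x. \<Sum>(\<alpha>, c) \<leftarrow> ms. c * (\<Prod>i<n. x i ^ \<alpha> i)) \<in> borel_measurable (lebn n)"
proof (induction ms)
  case Nil then show ?case by simp
next
  case (Cons a ms)
  obtain \<alpha> c where a: "a = (\<alpha>, c)" by (cases a)
  have "(\<lambda>x. c * (\<Prod>i<n. x i ^ \<alpha> i)) \<in> borel_measurable (lebn n)"
    unfolding lebn_def by measurable
  then show ?case using Cons by (simp add: a)
qed

lemma polyfun_measurable: "polyfun n f \<Longrightarrow> f \<in> borel_measurable (lebn n)"
proof -
  assume "polyfun n f"
  then obtain ms where "\<forall>x. f x = (\<Sum>(\<alpha>, c) \<leftarrow> ms. c * (\<Prod>i<n. x i ^ \<alpha> i))"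
    unfolding polyfun_def by blast
  then have "f = (\<lambda>x. \<Sum>(\<alpha>, c) \<leftarrow> ms. c * (\<Prod>i<n. x i ^ \<alpha> i))" by auto
  then show ?thesis using polysum_measurable by simp
qed

definition bnhds :: "nat \<Rightarrow> (nat \<Rightarrow> real) \<Rightarrow> (nat \<Rightarrow> real) filter" where
  "bnhds n x = (INF e\<in>{0<..}. principal {y. \<forall>i<n. \<bar>y i - x i\<bar> < e})"

lemma eventually_bnhds:
  "eventually P (bnhds n x) \<longleftrightarrow> (\<exists>e>0. \<forall>y. (\<forall>i<n. \<bar>y i - x i\<bar> < e) \<longrightarrow> P y)"
proof -
  have "eventually P (bnhds n x) \<longleftrightarrow> (\<exists>e\<in>{0<..}. eventually P (principal {y. \<forall>i<n. \<bar>y i - x i\<bar> < e}))"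
    unfolding bnhds_def
  proof (rule eventually_INF_base)
    fix a b :: real assume "a \<in> {0<..}" "b \<in> {0<..}"
    then show "\<exists>c\<in>{0<..}. principal {y. \<forall>i<n. \<bar>y i - x i\<bar> < c} \<le> inf (principal {y. \<forall>i<n. \<bar>y i - x i\<bar> < a})
                  (principal {y. \<forall>i<n. \<bar>y i - x i\<bar> < b})"
      by (intro bexI[of _ "min a b"]) auto
  qed auto
  then show ?thesis by (auto simp: eventually_principal)
qed

lemma tendsto_coord_bnhds: "i < n \<Longrightarrow> ((\<lambda>y. y i) \<longlongrightarrow> x i) (bnhds n x)"
  unfolding tendsto_iff dist_real_def eventually_bnhds by blast

lemma polysum_tendsto:
  "((\<lambda>y. \<Sum>(\<alpha>, c) \<leftarrow> ms. c * (\<Prod>i<n. y i ^ \<alpha> i)) \<longlongrightarrow> (\<Sum>(\<alpha>, c) \<leftarrow> ms. c * (\<Prod>i<n. x i ^ \<alpha> i))) (bnhds n x)"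
proof (induction ms)
  case Nil then show ?case by simp
next
  case (Cons a ms)
  obtain \<alpha> c where a: "a = (\<alpha>, c)" by (cases a)
  have "((\<lambda>y. c * (\<Prod>i<n. y i ^ \<alpha> i)) \<longlongrightarrow> c * (\<Prod>i<n. x i ^ \<alpha> i)) (bnhds n x)"
    by (intro tendsto_intros tendsto_prod tendsto_coord_bnhds) auto
  then show ?case using Cons by (simp add: a tendsto_add)
qed

lemma polyfun_tendsto: "polyfun n f \<Longrightarrow> (f \<longlongrightarrow> f x) (bnhds n x)"
proof -
  assume "polyfun n f"
  then obtain ms where "\<forall>x. f x = (\<Sum>(\<alpha>, c) \<leftarrow> ms. c * (\<Prod>i<n. x i ^ \<alpha> i))"
    unfolding polyfun_def by blast
  then have "f = (\<lambda>x. \<Sum>(\<alpha>, c) \<leftarrow> ms. c * (\<Prod>i<n. x i ^ \<alpha> i))" by auto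
  then show ?thesis using polysum_tendsto by simp
qed

lemma Rn_0: "Rn 0 = {\<lambda>_. undefined}"
  unfolding Rn_def by auto

lemma Rn_upd: "x \<in> Rn k \<Longrightarrow> x(k := t) \<in> Rn (Suc k)"
  unfolding Rn_def by (auto simp: PiE_def extensional_def)

lemma Rn_Suc_decomp: "x \<in> Rn (Suc k) \<Longrightarrow> x(k := undefined) \<in> Rn k \<and> x = (x(k := undefined))(k := x k)"
  unfolding Rn_def by (auto simp: PiE_def extensional_def)

lemma prod_upd_Suc:
  "(\<Prod>i<Suc k. ((x(k := t)) i) ^ a i) = (\<Prod>i<k. x i ^ a i) * t ^ a k"
proof -
  have "(\<Prod>i<k. ((x(k := t)) i) ^ a i) = (\<Prod>i<k. x i ^ a i)"
    by (rule prod.cong) auto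
  then show ?thesis by (simp add: lessThan_Suc mult.commute)
qed

definition Pk :: "nat \<Rightarrow> ((nat \<Rightarrow> nat) \<times> real) list \<Rightarrow> (nat \<Rightarrow> real) \<Rightarrow> real poly" where
  "Pk k ms x = (\<Sum>(\<alpha>, c) \<leftarrow> ms. monom (c * (\<Prod>i<k. x i ^ \<alpha> i)) (\<alpha> k))"

lemma poly_Pk: "poly (Pk k ms x) t = (\<Sum>(\<alpha>, c) \<leftarrow> ms. c * (\<Prod>i<Suc k. ((x(k := t)) i) ^ \<alpha> i))"
  unfolding Pk_def
proof (induction ms)
  case Nil then show ?case by simp
next
  case (Cons a ms)
  obtain \<alpha> c where a: "a = (\<alpha>, c)" by (cases a)
  show ?case using Cons by (simp add: a poly_monom prod_upd_Suc mult.assoc)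
qed

lemma coeff_Pk: "coeff (Pk k ms x) j = (\<Sum>(\<alpha>, c) \<leftarrow> map (\<lambda>(\<alpha>, c). (\<alpha>, if \<alpha> k = j then c else 0)) ms. c * (\<Prod>i<k. x i ^ \<alpha> i))"
  unfolding Pk_def
proof (induction ms)
  case Nil then show ?case by simp
next
  case (Cons a ms)
  obtain \<alpha> c where a: "a = (\<alpha>, c)" by (cases a)
  show ?case using Cons by (simp add: a coeff_monom)
qed

lemma finite_null_lborel: "finite (A :: real set) \<Longrightarrow> emeasure lborel A = 0"
  by (simp add: finite_imp_null_set_lborel null_setsD1)

lemma zero_null:
  "polyfun n f \<Longrightarrow> (\<exists>x\<in>Rn n. f x \<noteq> 0) \<Longrightarrow> {x\<in>Rn n. f x = 0} \<in> null_sets (lebn n)"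
proof (induction n arbitrary: f)
  case 0
  then have e: "{x\<in>Rn 0. f x = 0} = {}" by (auto simp: Rn_0)
  show ?case unfolding e by (rule null_sets.empty_sets)
next
  case (Suc k)
  from Suc.prems(1) obtain ms where f: "\<And>x. f x = (\<Sum>(\<alpha>, c) \<leftarrow> ms. c * (\<Prod>i<Suc k. x i ^ \<alpha> i))"
    unfolding polyfun_def by blast
  have fP: "f (x(k := t)) = poly (Pk k ms x) t" for x t
    by (simp add: f poly_Pk)
  from Suc.prems(2) obtain x0 where x0: "x0 \<in> Rn (Suc k)" "f x0 \<noteq> 0" by blast
  define x0' where "x0' = x0(k := undefined)"
  have x0': "x0' \<in> Rn k" "x0 = x0'(k := x0 k)" using Rn_Suc_decomp[OF x0(1)] by (auto simp: x0'_def)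
  have "poly (Pk k ms x0') (x0 k) \<noteq> 0" using x0 x0' fP by metis
  then have "Pk k ms x0' \<noteq> 0" by auto
  then obtain j where j: "coeff (Pk k ms x0') j \<noteq> 0" by (metis leading_coeff_0_iff)
  define cj where "cj = (\<lambda>x. coeff (Pk k ms x) j)"
  have cj_poly: "polyfun k cj"
    unfolding polyfun_def cj_def coeff_Pk by blast
  have "\<exists>x\<in>Rn k. cj x \<noteq> 0" using j x0' unfolding cj_def by blast
  with Suc.IH[OF cj_poly] have N: "{x\<in>Rn k. cj x = 0} \<in> null_sets (lebn k)" by blast
  let ?Z = "{x\<in>Rn (Suc k). f x = 0}"
  have fmeas: "f \<in> borel_measurable (lebn (Suc k))" by (rule polyfun_measurable[OF Suc.prems(1)])
  have Zs: "?Z \<in> sets (lebn (Suc k))"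
  proof -
    have "?Z = {x \<in> space (lebn (Suc k)). f x = 0}" by (simp add: space_lebn)
    also have "\<dots> \<in> sets (lebn (Suc k))" using fmeas by measurable
    finally show ?thesis .
  qed
  interpret product_sigma_finite "\<lambda>_. lborel" by standard
  have "emeasure (lebn (Suc k)) ?Z = (\<integral>\<^sup>+ x. indicator ?Z x \<partial>lebn (Suc k))"
    using Zs by simp
  also have "\<dots> = (\<integral>\<^sup>+ x. (\<integral>\<^sup>+ t. indicator ?Z (x(k := t)) \<partial>lborel) \<partial>lebn k)"
    unfolding lebn_def lessThan_Suc
    using Zs by (intro product_nn_integral_insert) (auto simp: lebn_def lessThan_Suc)
  also have "\<dots> = (\<integral>\<^sup>+ x. 0 \<partial>lebn k)"
  proof (rule nn_integral_cong_AE)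
    have "AE x in lebn k. x \<notin> {x\<in>Rn k. cj x = 0}" using N by (rule AE_not_in)
    then show "AE x in lebn k. (\<integral>\<^sup>+ t. indicator ?Z (x(k := t)) \<partial>lborel) = 0"
    proof (rule AE_mp[OF _ AE_I2], intro impI)
      fix x assume xs: "x \<in> space (lebn k)" and xN: "x \<notin> {x\<in>Rn k. cj x = 0}"
      have xR: "x \<in> Rn k" using xs by (simp add: space_lebn)
      then have "cj x \<noteq> 0" using xN by auto
      then have "Pk k ms x \<noteq> 0" unfolding cj_def by auto
      then have fin: "finite {t. poly (Pk k ms x) t = 0}" by (rule poly_roots_finite)
      have "(\<integral>\<^sup>+ t. indicator ?Z (x(k := t)) \<partial>lborel) = (\<integral>\<^sup>+ t. indicator {t. poly (Pk k ms x) t = 0} t \<partial>lborel)"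
        using Rn_upd[OF xR] by (intro nn_integral_cong) (auto simp: indicator_def fP)
      also have "\<dots> = emeasure lborel {t. poly (Pk k ms x) t = 0}"
        using fin by (intro nn_integral_indicator) (metis finite_imp_null_set_lborel null_setsD2 sets_lborel)
      also have "\<dots> = 0" using fin by (rule finite_null_lborel)
      finally show "(\<integral>\<^sup>+ t. indicator ?Z (x(k := t)) \<partial>lborel) = 0" .
    qed
  qed
  also have "\<dots> = 0" by simp
  finally show ?case using Zs by (simp add: null_sets_def)
qed

lemma semialg_sub: "semialg n S \<Longrightarrow> S \<subseteq> Rn n"
  by (induction rule: semialg.induct) auto

lemma semialg_sets: "semialg n S \<Longrightarrow> S \<in> sets (lebn n)"
proof (induction rule: semialg.induct)
  case (eq f)
  have m: "f \<in> borel_measurable (lebn n)" by (rule polyfun_measurable[OF alg_poly_polyfun[OF eq]])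
  have "{x \<in> space (lebn n). f x = 0} \<in> sets (lebn n)" using m by measurable
  then show ?case by (simp add: space_lebn)
next
  case (pos g)
  have m: "g \<in> borel_measurable (lebn n)" by (rule polyfun_measurable[OF alg_poly_polyfun[OF pos]])
  have "{x \<in> space (lebn n). g x > 0} \<in> sets (lebn n)" using m by measurable
  then show ?case by (simp add: space_lebn)
qed auto

lemma alg_poly_const: "algebraic c \<Longrightarrow> alg_poly n (\<lambda>_. c)"
  unfolding alg_poly_def Ralg_def
  by (intro exI[of _ "[(\<lambda>_. 0, c)]"]) auto

lemma alg_poly_neg: "alg_poly n f \<Longrightarrow> alg_poly n (\<lambda>x. - f x)"
proof -
  assume "alg_poly n f"
  then obtain ms where ms: "\<forall>(\<alpha>, c) \<in> set ms. c \<in> Ralg"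
      "\<forall>x. f x = (\<Sum>(\<alpha>, c) \<leftarrow> ms. c * (\<Prod>i<n. x i ^ \<alpha> i))"
    unfolding alg_poly_def by blast
  have "\<forall>x. - f x = (\<Sum>(\<alpha>, c) \<leftarrow> map (\<lambda>(\<alpha>, c). (\<alpha>, - c)) ms. c * (\<Prod>i<n. x i ^ \<alpha> i))"
  proof
    fix x
    have "- (\<Sum>(\<alpha>, c) \<leftarrow> ms. c * (\<Prod>i<n. x i ^ \<alpha> i)) =
       (\<Sum>(\<alpha>, c) \<leftarrow> map (\<lambda>(\<alpha>, c). (\<alpha>, - c)) ms. c * (\<Prod>i<n. x i ^ \<alpha> i))"
      by (induction ms) auto
    then show "- f x = (\<Sum>(\<alpha>, c) \<leftarrow> map (\<lambda>(\<alpha>, c). (\<alpha>, - c)) ms. c * (\<Prod>i<n. x i ^ \<alpha> i))"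
      using ms(2) by simp
  qed
  moreover have "\<forall>(\<alpha>, c) \<in> set (map (\<lambda>(\<alpha>, c). (\<alpha>, - c)) ms). c \<in> Ralg"
    using ms(1) by (auto simp: Ralg_def algebraic_minus_iff)
  ultimately show ?thesis unfolding alg_poly_def by blast
qed

lemma alg_poly_affine:
  assumes "i < n" "algebraic a" "algebraic s"
  shows "alg_poly n (\<lambda>x. s * x i + a)"
proof -
  let ?e = "\<lambda>j. if j = i then 1 else (0::nat)"
  have p: "(\<Prod>j<n. x j ^ ?e j) = x i" for x :: "nat \<Rightarrow> real"
  proof -
    have "(\<Prod>j<n. x j ^ ?e j) = (\<Prod>j\<in>{i}. x j ^ ?e j)"
      using assms(1) by (intro prod.mono_neutral_right) auto
    then show ?thesis by simp
  qed
  show ?thesis unfolding alg_poly_def Ralg_def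
    by (intro exI[of _ "[(?e, s), (\<lambda>_. 0, a)]"]) (simp add: p assms)
qed

lemma semialg_Rn: "semialg n (Rn n)"
proof -
  have "semialg n {x \<in> Rn n. (\<lambda>_. 0::real) x = 0}"
    by (rule semialg.eq[OF alg_poly_const]) simp
  then show ?thesis by simp
qed

lemma semialg_empty: "semialg n {}"
proof -
  have "semialg n {x \<in> Rn n. (\<lambda>_. -1::real) x > 0}"
    by (rule semialg.pos[OF alg_poly_const]) simp
  then show ?thesis by simp
qed

lemma semialg_compl: "semialg n S \<Longrightarrow> semialg n (Rn n - S)"
proof (induction rule: semialg.induct)
  case (eq f)
  have "Rn n - {x \<in> Rn n. f x = 0} = {x \<in> Rn n. f x > 0} \<union> {x \<in> Rn n. - f x > 0}" by auto
  then show ?case using eq by (simp only:) (intro semialg.un semialg.pos alg_poly_neg)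
next
  case (pos g)
  have "Rn n - {x \<in> Rn n. g x > 0} = {x \<in> Rn n. g x = 0} \<union> {x \<in> Rn n. - g x > 0}" by auto
  then show ?case using pos by (simp only:) (intro semialg.un semialg.eq semialg.pos alg_poly_neg)
next
  case (un A B)
  have "Rn n - (A \<union> B) = (Rn n - A) \<inter> (Rn n - B)" by auto
  then show ?case using un by (simp add: semialg.int)
next
  case (int A B)
  have "Rn n - (A \<inter> B) = (Rn n - A) \<union> (Rn n - B)" by auto
  then show ?case using int by (simp add: semialg.un)
qed

lemma semialg_diff: "semialg n A \<Longrightarrow> semialg n B \<Longrightarrow> semialg n (A - B)"
proof -
  assume a: "semialg n A" and b: "semialg n B"
  have "A - B = A \<inter> (Rn n - B)" using semialg_sub[OF a] by auto
  then show ?thesis using a semialg_compl[OF b] by (simp add: semialg.int)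
qed

lemma semialg_forall:
  "(\<And>i. i < (m::nat) \<Longrightarrow> semialg n {x \<in> Rn n. P i x}) \<Longrightarrow> semialg n {x \<in> Rn n. \<forall>i<m. P i x}"
proof (induction m)
  case 0 then show ?case using semialg_Rn by simp
next
  case (Suc m)
  have "{x \<in> Rn n. \<forall>i<Suc m. P i x} = {x \<in> Rn n. \<forall>i<m. P i x} \<inter> {x \<in> Rn n. P m x}"
    by (auto simp: less_Suc_eq)
  then show ?case using Suc by (simp add: semialg.int)
qed

lemma semialg_lt:
  assumes "i < n" "algebraic a"
  shows "semialg n {x \<in> Rn n. a < x i}" "semialg n {x \<in> Rn n. x i < a}"
proof -
  have "semialg n {x \<in> Rn n. (\<lambda>x. 1 * x i + - a) x > 0}"
    using assms by (intro semialg.pos alg_poly_affine) auto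
  then show "semialg n {x \<in> Rn n. a < x i}" by simp
  have "semialg n {x \<in> Rn n. (\<lambda>x. (-1) * x i + a) x > 0}"
    using assms by (intro semialg.pos alg_poly_affine) auto
  then show "semialg n {x \<in> Rn n. x i < a}" by simp
qed

lemma semialg_le:
  assumes "i < n" "algebraic a"
  shows "semialg n {x \<in> Rn n. a \<le> x i}" "semialg n {x \<in> Rn n. x i \<le> a}"
proof -
  have "{x \<in> Rn n. a \<le> x i} = Rn n - {x \<in> Rn n. x i < a}" by auto
  then show "semialg n {x \<in> Rn n. a \<le> x i}" using semialg_compl[OF semialg_lt(2)[OF assms]] by simp
  have "{x \<in> Rn n. x i \<le> a} = Rn n - {x \<in> Rn n. a < x i}" by auto
  then show "semialg n {x \<in> Rn n. x i \<le> a}" using semialg_compl[OF semialg_lt(1)[OF assms]] by simp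
qed

definition obox :: "nat \<Rightarrow> (nat \<Rightarrow> real) \<Rightarrow> (nat \<Rightarrow> real) \<Rightarrow> (nat \<Rightarrow> real) set" where
  "obox n l u = {x \<in> Rn n. \<forall>i<n. l i < x i \<and> x i < u i}"

definition cbx :: "nat \<Rightarrow> (nat \<Rightarrow> real) \<Rightarrow> (nat \<Rightarrow> real) \<Rightarrow> (nat \<Rightarrow> real) set" where
  "cbx n l u = {x \<in> Rn n. \<forall>i<n. l i \<le> x i \<and> x i \<le> u i}"

lemma semialg_obox:
  assumes "\<And>i. i < n \<Longrightarrow> algebraic (l i) \<and> algebraic (u i)"
  shows "semialg n (obox n l u)"
  unfolding obox_def
proof (rule semialg_forall)
  fix i assume i: "i < n"
  have "{x \<in> Rn n. l i < x i \<and> x i < u i} = {x \<in> Rn n. l i < x i} \<inter> {x \<in> Rn n. x i < u i}" by auto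
  then show "semialg n {x \<in> Rn n. l i < x i \<and> x i < u i}"
    using semialg_lt[OF i] assms[OF i] by (simp add: semialg.int)
qed

lemma semialg_cbx:
  assumes "\<And>i. i < n \<Longrightarrow> algebraic (l i) \<and> algebraic (u i)"
  shows "semialg n (cbx n l u)"
  unfolding cbx_def
proof (rule semialg_forall)
  fix i assume i: "i < n"
  have "{x \<in> Rn n. l i \<le> x i \<and> x i \<le> u i} = {x \<in> Rn n. l i \<le> x i} \<inter> {x \<in> Rn n. x i \<le> u i}" by auto
  then show "semialg n {x \<in> Rn n. l i \<le> x i \<and> x i \<le> u i}"
    using semialg_le[OF i] assms[OF i] by (simp add: semialg.int)
qed

definition bopen :: "nat \<Rightarrow> (nat \<Rightarrow> real) set \<Rightarrow> bool" where
  "bopen n U \<longleftrightarrow> (\<forall>x\<in>U. \<exists>e>0. \<forall>y\<in>Rn n. (\<forall>i<n. \<bar>y i - x i\<bar> < e) \<longrightarrow> y \<in> U)"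

lemma null_subset_union:
  assumes "C \<in> sets M" "C \<subseteq> A \<union> B" "A \<in> null_sets M" "B \<in> null_sets M"
  shows "C \<in> null_sets M"
  using assms by (meson null_sets.Un null_sets_subset)

lemma bopen_Rn: "bopen n (Rn n)"
  unfolding bopen_def by (auto intro: exI[of _ 1])

lemma bopen_Un: "bopen n A \<Longrightarrow> bopen n B \<Longrightarrow> bopen n (A \<union> B)"
  unfolding bopen_def by blast

lemma bopen_Int: "bopen n A \<Longrightarrow> bopen n B \<Longrightarrow> bopen n (A \<inter> B)"
  unfolding bopen_def
proof (intro ballI)
  fix x assume a: "\<forall>x\<in>A. \<exists>e>0. \<forall>y\<in>Rn n. (\<forall>i<n. \<bar>y i - x i\<bar> < e) \<longrightarrow> y \<in> A"
    and b: "\<forall>x\<in>B. \<exists>e>0. \<forall>y\<in>Rn n. (\<forall>i<n. \<bar>y i - x i\<bar> < e) \<longrightarrow> y \<in> B"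
    and x: "x \<in> A \<inter> B"
  obtain e1 where e1: "e1 > 0" "\<forall>y\<in>Rn n. (\<forall>i<n. \<bar>y i - x i\<bar> < e1) \<longrightarrow> y \<in> A"
    using a x by blast
  obtain e2 where e2: "e2 > 0" "\<forall>y\<in>Rn n. (\<forall>i<n. \<bar>y i - x i\<bar> < e2) \<longrightarrow> y \<in> B"
    using b x by blast
  show "\<exists>e>0. \<forall>y\<in>Rn n. (\<forall>i<n. \<bar>y i - x i\<bar> < e) \<longrightarrow> y \<in> A \<inter> B"
  proof (intro exI[of _ "min e1 e2"] conjI ballI impI)
    show "min e1 e2 > 0" using e1 e2 by simp
    fix y assume "y \<in> Rn n" "\<forall>i<n. \<bar>y i - x i\<bar> < min e1 e2"
    then show "y \<in> A \<inter> B" using e1(2) e2(2) by simp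
  qed
qed

lemma bopen_pos: "alg_poly n g \<Longrightarrow> bopen n {x \<in> Rn n. g x > 0}"
  unfolding bopen_def
proof
  fix x assume ag: "alg_poly n g" and x: "x \<in> {x \<in> Rn n. g x > 0}"
  have "(g \<longlongrightarrow> g x) (bnhds n x)" by (intro polyfun_tendsto alg_poly_polyfun ag)
  moreover have "g x > 0" using x by simp
  ultimately have "eventually (\<lambda>y. g y > 0) (bnhds n x)" by (rule order_tendstoD)
  then obtain e where "e > 0" "\<forall>y. (\<forall>i<n. \<bar>y i - x i\<bar> < e) \<longrightarrow> g y > 0"
    unfolding eventually_bnhds by blast
  then show "\<exists>e>0. \<forall>y\<in>Rn n. (\<forall>i<n. \<bar>y i - x i\<bar> < e) \<longrightarrow> y \<in> {x \<in> Rn n. g x > 0}"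
    by blast
qed

lemma open_core:
  "semialg n S \<Longrightarrow> \<exists>U. semialg n U \<and> U \<subseteq> S \<and> bopen n U \<and> S - U \<in> null_sets (lebn n)"
proof (induction rule: semialg.induct)
  case (eq f)
  show ?case
  proof (cases "\<exists>x\<in>Rn n. f x \<noteq> 0")
    case True
    then have "{x \<in> Rn n. f x = 0} \<in> null_sets (lebn n)"
      by (intro zero_null alg_poly_polyfun eq)
    moreover have "bopen n {}" unfolding bopen_def by simp
    ultimately show ?thesis using semialg_empty by (intro exI[of _ "{}"]) simp
  next
    case False
    then have e: "{x \<in> Rn n. f x = 0} = Rn n" by auto
    show ?thesis unfolding e using semialg_Rn bopen_Rn
      by (intro exI[of _ "Rn n"]) simp
  qed
next
  case (pos g)
  show ?case using bopen_pos[OF pos] semialg.pos[OF pos]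
    by (intro exI[of _ "{x \<in> Rn n. g x > 0}"]) simp
next
  case (un A B)
  from un.IH obtain OA where o1: "semialg n OA" "OA \<subseteq> A" "bopen n OA" "A - OA \<in> null_sets (lebn n)" by blast
  from un.IH obtain OB where o2: "semialg n OB" "OB \<subseteq> B" "bopen n OB" "B - OB \<in> null_sets (lebn n)" by blast
  have s: "(A \<union> B) - (OA \<union> OB) \<in> sets (lebn n)"
    using semialg_sets[OF un.hyps(1)] semialg_sets[OF un.hyps(2)] semialg_sets[OF o1(1)] semialg_sets[OF o2(1)]
    by blast
  have "(A \<union> B) - (OA \<union> OB) \<in> null_sets (lebn n)"
    by (rule null_subset_union[OF s _ o1(4) o2(4)]) blast
  then show ?case using o1 o2 bopen_Un[OF o1(3) o2(3)] semialg.un[OF o1(1) o2(1)]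
    by (intro exI[of _ "OA \<union> OB"]) blast
next
  case (int A B)
  from int.IH obtain OA where o1: "semialg n OA" "OA \<subseteq> A" "bopen n OA" "A - OA \<in> null_sets (lebn n)" by blast
  from int.IH obtain OB where o2: "semialg n OB" "OB \<subseteq> B" "bopen n OB" "B - OB \<in> null_sets (lebn n)" by blast
  have s: "(A \<inter> B) - (OA \<inter> OB) \<in> sets (lebn n)"
    using semialg_sets[OF int.hyps(1)] semialg_sets[OF int.hyps(2)] semialg_sets[OF o1(1)] semialg_sets[OF o2(1)]
    by blast
  have "(A \<inter> B) - (OA \<inter> OB) \<in> null_sets (lebn n)"
    by (rule null_subset_union[OF s _ o1(4) o2(4)]) blast
  then show ?case using o1 o2 bopen_Int[OF o1(3) o2(3)] semialg.int[OF o1(1) o2(1)]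
    by (intro exI[of _ "OA \<inter> OB"]) blast
qed

lemma coeff_mult_Rats:
  assumes "\<And>i. coeff p i \<in> \<rat>" "\<And>i. coeff q i \<in> \<rat>"
  shows "coeff (p * q) n \<in> (\<rat> :: real set)"
  unfolding coeff_mult using assms by (intro Rats_sum Rats_mult) auto

lemma coeff_pcompose_Rats:
  fixes p q :: "real poly"
  assumes "\<And>i. coeff p i \<in> \<rat>" "\<And>i. coeff q i \<in> \<rat>"
  shows "coeff (pcompose p q) n \<in> \<rat>"
  using assms
proof (induction p arbitrary: n)
  case (pCons a p)
  have a: "a \<in> \<rat>" using pCons.prems(1)[of 0] by simp
  have p: "coeff p i \<in> \<rat>" for i using pCons.prems(1)[of "Suc i"] by simp
  have "coeff (pcompose p q) i \<in> \<rat>" for i using pCons.IH[OF p pCons.prems(2)] .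
  then have "coeff (q * pcompose p q) n \<in> \<rat>" by (intro coeff_mult_Rats pCons.prems(2))
  moreover have "coeff [:a:] n \<in> \<rat>" using a by (cases n) auto
  ultimately show ?case by (simp add: pcompose_pCons)
qed simp

lemma algebraic_affine:
  fixes x :: real
  assumes "algebraic x" "q \<in> \<rat>" "r \<in> \<rat>"
  shows "algebraic (q * x + r)"
proof (cases "q = 0")
  case True then show ?thesis using assms by (simp add: rat_imp_algebraic)
next
  case False
  from assms(1) obtain p :: "real poly" where p: "\<And>i. coeff p i \<in> \<rat>" "p \<noteq> 0" "poly p x = 0"
    unfolding algebraic_altdef by blast
  define p' where "p' = pcompose p [:- r / q, 1 / q:]"
  have "coeff [:- r / q, 1 / q:] i \<in> \<rat>" for i
    using assms False by (cases i; cases "i - 1") (auto simp: coeff_pCons)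
  then have "coeff p' i \<in> \<rat>" for i unfolding p'_def by (intro coeff_pcompose_Rats p)
  moreover have "p' \<noteq> 0" unfolding p'_def using p(2) False by (subst pcompose_eq_0_iff) auto
  moreover have "poly p' (q * x + r) = 0" unfolding p'_def poly_pcompose
    using False p(3) by (simp add: field_simps)
  ultimately show ?thesis unfolding algebraic_altdef by blast
qed

lemma algebraic_add_rat: "algebraic (x::real) \<Longrightarrow> r \<in> \<rat> \<Longrightarrow> algebraic (x + r)"
  using algebraic_affine[of x 1 r] by simp

lemma algebraic_rat_sub: "algebraic (x::real) \<Longrightarrow> r \<in> \<rat> \<Longrightarrow> algebraic (r - x)"
  using algebraic_affine[of x "-1" r] by simp

lemma cbx_PiE: "cbx n l u = PiE {..<n} (\<lambda>i. {l i..u i})"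
  unfolding cbx_def Rn_def by (auto simp: PiE_def Pi_def)

lemma obox_PiE: "obox n l u = PiE {..<n} (\<lambda>i. {l i<..<u i})"
  unfolding obox_def Rn_def by (auto simp: PiE_def Pi_def)

lemma emeasure_cbx:
  assumes "\<And>i. i < n \<Longrightarrow> l i \<le> u i"
  shows "emeasure (lebn n) (cbx n l u) = ennreal (\<Prod>i<n. u i - l i)"
proof -
  interpret product_sigma_finite "\<lambda>_. lborel" by standard
  have "emeasure (lebn n) (cbx n l u) = (\<Prod>i<n. emeasure lborel {l i..u i})"
    unfolding cbx_PiE lebn_def by (rule emeasure_PiM) auto
  also have "\<dots> = (\<Prod>i<n. ennreal (u i - l i))" using assms by (intro prod.cong) auto
  also have "\<dots> = ennreal (\<Prod>i<n. u i - l i)" by (rule prod_ennreal) (use assms in auto)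
  finally show ?thesis .
qed

lemma emeasure_obox:
  assumes "\<And>i. i < n \<Longrightarrow> l i \<le> u i"
  shows "emeasure (lebn n) (obox n l u) = ennreal (\<Prod>i<n. u i - l i)"
proof -
  interpret product_sigma_finite "\<lambda>_. lborel" by standard
  have "emeasure (lebn n) (obox n l u) = (\<Prod>i<n. emeasure lborel {l i<..<u i})"
    unfolding obox_PiE lebn_def by (rule emeasure_PiM) auto
  also have "\<dots> = (\<Prod>i<n. ennreal (u i - l i))" using assms by (intro prod.cong) auto
  also have "\<dots> = ennreal (\<Prod>i<n. u i - l i)" by (rule prod_ennreal) (use assms in auto)
  finally show ?thesis .
qed

lemma measure_cbx:
  assumes "\<And>i. i < n \<Longrightarrow> l i \<le> u i"
  shows "measure (lebn n) (cbx n l u) = (\<Prod>i<n. u i - l i)"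
proof -
  have "0 \<le> (\<Prod>i<n. u i - l i)" using assms by (intro prod_nonneg) auto
  then show ?thesis using emeasure_cbx[OF assms] by (simp add: measure_def)
qed

lemma measure_obox:
  assumes "\<And>i. i < n \<Longrightarrow> l i \<le> u i"
  shows "measure (lebn n) (obox n l u) = (\<Prod>i<n. u i - l i)"
proof -
  have "0 \<le> (\<Prod>i<n. u i - l i)" using assms by (intro prod_nonneg) auto
  then show ?thesis using emeasure_obox[OF assms] by (simp add: measure_def)
qed

lemma cbx_sets: "cbx n l u \<in> sets (lebn n)"
  unfolding cbx_PiE lebn_def by (rule sets_PiM_I_finite) auto

lemma obox_sets: "obox n l u \<in> sets (lebn n)"
  unfolding obox_PiE lebn_def by (rule sets_PiM_I_finite) auto

lemma compact_cbx: "compact (cbx n l u)"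
proof -
  have e: "cbx n l u = PiE UNIV (\<lambda>i. if i < n then {l i..u i} else {undefined})"
    unfolding cbx_PiE by (auto simp: PiE_def Pi_def extensional_def)
  have "compactin (product_topology (\<lambda>_. euclidean) UNIV) (PiE UNIV (\<lambda>i. if i < n then {l i..u i} else {undefined :: real}))"
    by (subst compactin_PiE) auto
  then show ?thesis unfolding e by (metis compactin_euclidean_iff euclidean_product_topology)
qed

lemma open_box_set: "open {x :: nat \<Rightarrow> real. \<forall>i<n. l i < x i \<and> x i < u i}"
proof -
  have e: "{x :: nat \<Rightarrow> real. \<forall>i<n. l i < x i \<and> x i < u i} = (\<Inter>i<n. {x. l i < x i} \<inter> {x. x i < u i})" by auto
  have "open {x :: nat \<Rightarrow> real. l i < x i}" "open {x :: nat \<Rightarrow> real. x i < u i}" for i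
    by (auto intro!: open_Collect_less continuous_intros)
  then show ?thesis unfolding e by (intro open_INT) auto
qed

lemma bopen_open:
  assumes "bopen n U" "U \<subseteq> Rn n"
  shows "\<exists>V. open V \<and> U = Rn n \<inter> V"
proof -
  have "\<forall>x\<in>U. \<exists>e>0. \<forall>y\<in>Rn n. (\<forall>i<n. \<bar>y i - x i\<bar> < e) \<longrightarrow> y \<in> U"
    using assms(1) unfolding bopen_def .
  then obtain e where e: "\<And>x. x \<in> U \<Longrightarrow> e x > 0 \<and> (\<forall>y\<in>Rn n. (\<forall>i<n. \<bar>y i - x i\<bar> < e x) \<longrightarrow> y \<in> U)"
    by metis
  define V where "V = (\<Union>x\<in>U. {y. \<forall>i<n. x i - e x < y i \<and> y i < x i + e x})"
  have "open V" unfolding V_def by (intro open_UN ballI open_box_set)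
  moreover have "U = Rn n \<inter> V"
  proof
    show "U \<subseteq> Rn n \<inter> V" using assms(2) e unfolding V_def by fastforce
    show "Rn n \<inter> V \<subseteq> U"
    proof
      fix y assume "y \<in> Rn n \<inter> V"
      then obtain x where x: "x \<in> U" "y \<in> Rn n" "\<forall>i<n. x i - e x < y i \<and> y i < x i + e x"
        unfolding V_def by blast
      then have "\<forall>i<n. \<bar>y i - x i\<bar> < e x" by (auto simp: abs_less_iff)
      then show "y \<in> U" using e[OF x(1)] x(2) by blast
    qed
  qed
  ultimately show ?thesis by blast
qed

lemma compact_diff_bopen:
  assumes "compact K" "K \<subseteq> Rn n" "bopen n U" "U \<subseteq> Rn n"
  shows "compact (K - U)"
proof -
  obtain V where V: "open V" "U = Rn n \<inter> V" using bopen_open[OF assms(3,4)] by blast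
  have "K - U = K \<inter> (- V)" using assms(2) V(2) by auto
  then show ?thesis using assms(1) V(1) by (simp add: compact_Int_closed open_closed)
qed

lemma compact_bounded_Rn:
  fixes K :: "(nat \<Rightarrow> real) set"
  assumes "compact K"
  shows "\<exists>R::nat. R \<ge> 1 \<and> (\<forall>x\<in>K. \<forall>i<n. \<bar>x i\<bar> \<le> R)"
proof -
  have "\<exists>B. \<forall>x\<in>K. \<bar>x i\<bar> \<le> B" for i
  proof -
    have "compact ((\<lambda>x. x i) ` K)"
      by (rule compact_continuous_image[OF _ assms]) (auto intro: continuous_on_subset[OF continuous_on_product_coordinates])
    then have "bounded ((\<lambda>x. x i) ` K)" by (rule compact_imp_bounded)
    then obtain B where "\<forall>y\<in>(\<lambda>x. x i) ` K. norm y \<le> B" unfolding bounded_iff by blast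
    then show ?thesis by auto
  qed
  then obtain B where B: "\<And>i x. x \<in> K \<Longrightarrow> \<bar>x i\<bar> \<le> B i" by metis
  define R where "R = nat \<lceil>\<Sum>i<n. \<bar>B i\<bar>\<rceil> + 1"
  have "\<bar>x i\<bar> \<le> R" if "x \<in> K" "i < n" for x i
  proof -
    have "\<bar>x i\<bar> \<le> \<bar>B i\<bar>" using B[OF that(1), of i] by linarith
    also have "\<bar>B i\<bar> \<le> (\<Sum>i<n. \<bar>B i\<bar>)"
      using that(2) by (intro member_le_sum) auto
    also have "\<dots> \<le> R" unfolding R_def by linarith
    finally show ?thesis .
  qed
  moreover have "R \<ge> 1" unfolding R_def by simp
  ultimately show ?thesis by (intro exI[of _ R] conjI) auto
qed

lemma SA_sets: "K \<in> SA n \<Longrightarrow> K \<in> sets (lebn n)"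
  unfolding SA_def by (auto intro: semialg_sets)

lemma emeasure_bounded_finite:
  assumes "K \<in> sets (lebn n)" "\<forall>x\<in>K. \<forall>i<n. \<bar>x i\<bar> \<le> R" "K \<subseteq> Rn n"
  shows "emeasure (lebn n) K \<noteq> \<infinity>"
proof -
  have "K \<subseteq> cbx n (\<lambda>_. - R) (\<lambda>_. R)"
  proof
    fix x assume x: "x \<in> K"
    have "\<forall>i<n. - R \<le> x i \<and> x i \<le> R"
    proof (intro allI impI)
      fix i assume "i < n"
      then have "\<bar>x i\<bar> \<le> R" using assms(2) x by blast
      then show "- R \<le> x i \<and> x i \<le> R" by linarith
    qed
    then show "x \<in> cbx n (\<lambda>_. - R) (\<lambda>_. R)" using x assms(3) unfolding cbx_def by blast
  qed
  then have "emeasure (lebn n) K \<le> emeasure (lebn n) (cbx n (\<lambda>_. - R) (\<lambda>_. R))"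
    by (intro emeasure_mono cbx_sets)
  also have "\<dots> < \<infinity>"
  proof (cases "R \<ge> 0")
    case True then show ?thesis by (subst emeasure_cbx) auto
  next
    case False
    then have "cbx n (\<lambda>_. - R) (\<lambda>_. R) \<subseteq> obox n (\<lambda>_. 0) (\<lambda>_. 0)" unfolding cbx_def obox_def by auto
    then have "emeasure (lebn n) (cbx n (\<lambda>_. - R) (\<lambda>_. R)) \<le> emeasure (lebn n) (obox n (\<lambda>_. 0) (\<lambda>_. 0))"
      by (intro emeasure_mono obox_sets)
    also have "\<dots> < \<infinity>" by (subst emeasure_obox) auto
    finally show ?thesis .
  qed
  finally show ?thesis by simp
qed

definition wit :: "nat \<Rightarrow> real \<Rightarrow> bool" where
  "wit k v \<longleftrightarrow> (\<exists>K. K \<in> SA k \<and> compact K \<and> v = measure (lebn k) K)"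

lemma SA_sub: "K \<in> SA k \<Longrightarrow> K \<subseteq> Rn k"
  unfolding SA_def by (auto dest: semialg_sub)

lemma rat_alg: "x \<in> \<rat> \<Longrightarrow> algebraic (x::real)"
  by (rule rat_imp_algebraic)

lemma prod_first:
  assumes "k > 0"
  shows "(\<Prod>i<k. f i) = f 0 * (\<Prod>i<k - 1. f (Suc i))"
proof -
  obtain k' where k: "k = Suc k'" using assms by (cases k) auto
  show ?thesis unfolding k prod.lessThan_Suc_shift by simp
qed

lemma op_add:
  assumes K: "K \<in> SA k" "compact K" and k: "k > 0" and c: "algebraic c" "c > 0"
  shows "wit k (measure (lebn k) K + c)"
proof -
  from compact_bounded_Rn[OF K(2), of k]
  obtain R :: nat where R: "real R \<ge> 1" "\<forall>x\<in>K. \<forall>i<k. \<bar>x i\<bar> \<le> real R"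
    by (elim exE conjE) (rule that)
  define l where "l = (\<lambda>i::nat. if i = 0 then real R + 1 else 0)"
  define u where "u = (\<lambda>i::nat. if i = 0 then c + (real R + 1) else 1)"
  define D where "D = cbx k l u"
  have lu: "l i \<le> u i" for i unfolding l_def u_def using c by auto
  have a1: "algebraic (c + (real R + 1))" by (rule algebraic_add_rat[OF c(1)]) simp
  have a2: "algebraic (real R + 1)" by (rule rat_alg) simp
  have alg: "algebraic (l i) \<and> algebraic (u i)" for i
    unfolding l_def u_def using a1 a2 by auto
  have Ds: "semialg k D" unfolding D_def by (intro semialg_cbx alg)
  have KR: "K \<subseteq> Rn k" by (rule SA_sub[OF K(1)])
  have disj: "K \<inter> D = {}"
  proof (rule ccontr)
    assume "K \<inter> D \<noteq> {}"
    then obtain x where x: "x \<in> K" "x \<in> D" by blast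
    then have "real R + 1 \<le> x 0" using k unfolding D_def cbx_def l_def by auto
    moreover have "\<bar>x 0\<bar> \<le> R" using R(2) x(1) k by blast
    ultimately show False by linarith
  qed
  have "(\<Prod>i<k. u i - l i) = c"
    using k by (subst prod_first) (auto simp: u_def l_def)
  then have mD: "measure (lebn k) D = c" "emeasure (lebn k) D \<noteq> \<infinity>"
    unfolding D_def using lu by (auto simp: measure_cbx emeasure_cbx)
  have Ks: "K \<in> sets (lebn k)" by (rule SA_sets[OF K(1)])
  have mK: "emeasure (lebn k) K \<noteq> \<infinity>" by (rule emeasure_bounded_finite[OF Ks R(2) KR])
  have "measure (lebn k) (K \<union> D) = measure (lebn k) K + c"
    using measure_Union[OF mK mD(2) Ks _ disj] mD(1) D_def cbx_sets by simp
  moreover have "K \<union> D \<in> SA k"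
  proof -
    have Ksa: "semialg k K" and ne: "nonempty_interior k K" using K(1) unfolding SA_def by auto
    have "semialg k (K \<union> D)" by (rule semialg.un[OF Ksa Ds])
    moreover have "nonempty_interior k (K \<union> D)"
    proof -
      from ne obtain x e where "x \<in> K" "e > 0" "\<forall>y\<in>Rn k. (\<forall>i<k. \<bar>y i - x i\<bar> < e) \<longrightarrow> y \<in> K"
        unfolding nonempty_interior_def by blast
      then show ?thesis unfolding nonempty_interior_def by (intro bexI[of _ x] exI[of _ e]) auto
    qed
    ultimately show ?thesis unfolding SA_def by simp
  qed
  moreover have "compact (K \<union> D)" unfolding D_def using K(2) compact_cbx by (rule compact_Un)
  ultimately show ?thesis unfolding wit_def by (intro exI[of _ "K \<union> D"]) simp
qed

lemma measure_core:
  assumes "K \<in> sets (lebn k)" "U \<subseteq> K" "K - U \<in> null_sets (lebn k)"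
  shows "measure (lebn k) U = measure (lebn k) K"
proof -
  have "K - (K - U) = U" using assms(2) by blast
  then show ?thesis using measure_Diff_null_set[OF assms(1) assms(3)] by simp
qed

lemma op_comp:
  assumes K: "K \<in> SA k" "compact K" and k: "k > 0"
  shows "\<exists>N0::nat. \<forall>N\<ge>N0. wit k (real N - measure (lebn k) K)"
proof -
  from compact_bounded_Rn[OF K(2), of k]
  obtain R :: nat where R: "real R \<ge> 1" "\<forall>x\<in>K. \<forall>i<k. \<bar>x i\<bar> \<le> real R"
    by (elim exE conjE) (rule that)
  have KR: "K \<subseteq> Rn k" by (rule SA_sub[OF K(1)])
  have Ks: "K \<in> sets (lebn k)" by (rule SA_sets[OF K(1)])
  have Ksa: "semialg k K" using K(1) unfolding SA_def by auto
  obtain U where U: "semialg k U" "U \<subseteq> K" "bopen k U" "K - U \<in> null_sets (lebn k)"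
    using open_core[OF Ksa] by blast
  have mU: "measure (lebn k) U = measure (lebn k) K" by (rule measure_core[OF Ks U(2) U(4)])
  have UR: "U \<subseteq> Rn k" using U(2) KR by auto
  have Us: "U \<in> sets (lebn k)" by (rule semialg_sets[OF U(1)])
  define M :: real where "M = (2 * real R) ^ (k - 1)"
  have Mpos: "M > 0" unfolding M_def using R(1) by simp
  have "\<forall>N\<ge>(2 * R) ^ k + 1. wit k (real N - measure (lebn k) K)"
  proof (intro allI impI)
    fix N :: nat assume N: "N \<ge> (2 * R) ^ k + 1"
    define L where "L = real N / M - 2 * real R"
    have "(2 * real R) ^ k = (2 * real R) * M" unfolding M_def using k
      by (metis Suc_diff_1 power_Suc)
    moreover have "real N \<ge> (2 * real R) ^ k + 1"
    proof -
      have "real N \<ge> real ((2 * R) ^ k + 1)" using N by linarith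
      then show ?thesis by simp
    qed
    ultimately have "real N > (2 * real R) * M" by linarith
    then have Lpos: "L > 0" unfolding L_def using Mpos by (simp add: field_simps)
    have LQ: "L \<in> \<rat>" unfolding L_def M_def by simp
    define l where "l = (\<lambda>i::nat. - real R)"
    define u where "u = (\<lambda>i::nat. if i = 0 then real R + L else real R)"
    define B where "B = cbx k l u"
    have lu: "l i \<le> u i" for i unfolding l_def u_def using Lpos by auto
    have alg: "algebraic (l i) \<and> algebraic (u i)" for i
      unfolding l_def u_def using LQ by (auto intro!: rat_alg)
    have Bs: "semialg k B" unfolding B_def by (intro semialg_cbx alg)
    have "(\<Prod>i<k. u i - l i) = (2 * real R + L) * M"
    proof -
      have "(\<Prod>i<k - 1. u (Suc i) - l (Suc i)) = M" unfolding M_def u_def l_def by simp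
      then show ?thesis using k by (subst prod_first) (auto simp: u_def l_def)
    qed
    also have "\<dots> = real N" unfolding L_def using Mpos by (simp add: field_simps)
    finally have mB: "measure (lebn k) B = real N" "emeasure (lebn k) B \<noteq> \<infinity>"
      unfolding B_def using lu by (auto simp: measure_cbx emeasure_cbx)
    have KB: "K \<subseteq> B"
    proof
      fix x assume x: "x \<in> K"
      have "\<forall>i<k. l i \<le> x i \<and> x i \<le> u i"
      proof (intro allI impI)
        fix i assume "i < k"
        then have "\<bar>x i\<bar> \<le> R" using R(2) x by blast
        then show "l i \<le> x i \<and> x i \<le> u i" unfolding l_def u_def using Lpos by auto
      qed
      then show "x \<in> B" using x KR unfolding B_def cbx_def by blast
    qed
    define K' where "K' = B - U"
    have K's: "semialg k K'" unfolding K'_def by (rule semialg_diff[OF Bs U(1)])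
    have BR: "B \<subseteq> Rn k" unfolding B_def cbx_def by auto
    have K'c: "compact K'" unfolding K'_def B_def
      by (rule compact_diff_bopen[OF compact_cbx _ U(3) UR]) (use BR B_def in auto)
    have "measure (lebn k) K' = real N - measure (lebn k) K"
      unfolding K'_def using measure_Diff[OF mB(2) _ Us] mB(1) mU KB U(2) B_def cbx_sets by auto
    moreover have "nonempty_interior k K'"
    proof -
      define x where "x = (\<lambda>i. if i < k then (if i = 0 then real R + L / 2 else 0) else undefined)"
      define e where "e = min (L / 2) 1"
      have xR: "x \<in> Rn k" unfolding x_def Rn_def by (auto simp: PiE_def extensional_def split: if_splits)
      have nb: "y \<in> K'" if y: "y \<in> Rn k" "\<forall>i<k. \<bar>y i - x i\<bar> < e" for y
      proof -
        have y0: "\<bar>y 0 - (real R + L / 2)\<bar> < e" using y(2) k unfolding x_def by auto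
        have yB: "y \<in> B"
        proof -
          have "\<forall>i<k. l i \<le> y i \<and> y i \<le> u i"
          proof (intro allI impI)
            fix i assume i: "i < k"
            show "l i \<le> y i \<and> y i \<le> u i"
            proof (cases "i = 0")
              case True
              have h: "\<bar>y 0 - (real R + L / 2)\<bar> < L / 2" using y0 unfolding e_def by auto
              then have "real R < y 0" "y 0 < real R + L" using abs_less_iff[of "y 0 - (real R + L / 2)" "L / 2"] by linarith+
              then show ?thesis using True R(1) unfolding l_def u_def by auto
            next
              case False
              then have "\<bar>y i\<bar> < e" using y(2) i unfolding x_def by auto
              then show ?thesis using False R(1) unfolding l_def u_def e_def by (auto simp: abs_less_iff)
            qed
          qed
          then show ?thesis using y(1) unfolding B_def cbx_def by blast
        qed
        have "y \<notin> K"
        proof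
          assume "y \<in> K"
          then have "\<bar>y 0\<bar> \<le> R" using R(2) k by blast
          moreover have "y 0 > R"
          proof -
            have "\<bar>y 0 - (real R + L / 2)\<bar> < L / 2" using y0 unfolding e_def by auto
            then show ?thesis using abs_less_iff[of "y 0 - (real R + L / 2)" "L / 2"] by linarith
          qed
          ultimately show False by linarith
        qed
        then show "y \<in> K'" unfolding K'_def using yB U(2) by blast
      qed
      have "x \<in> K'" using nb[OF xR] Lpos unfolding e_def by simp
      moreover have "e > 0" unfolding e_def using Lpos by simp
      ultimately show ?thesis unfolding nonempty_interior_def using nb by blast
    qed
    ultimately show "wit k (real N - measure (lebn k) K)"
      unfolding wit_def SA_def using K's K'c by auto
  qed
  then show ?thesis by blast
qed

definition cube :: "nat \<Rightarrow> nat \<Rightarrow> (nat \<Rightarrow> int) \<Rightarrow> (nat \<Rightarrow> real) set" where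
  "cube k m z = {y \<in> Rn k. \<forall>i<k. real_of_int (z i) / 2 ^ m \<le> y i \<and> y i < (real_of_int (z i) + 1) / 2 ^ m}"

definition gidx :: "nat \<Rightarrow> nat \<Rightarrow> (nat \<Rightarrow> real) \<Rightarrow> nat \<Rightarrow> int" where
  "gidx k m x = (\<lambda>i. if i < k then \<lfloor>x i * 2 ^ m\<rfloor> else 0)"

lemma cube_mem: "x \<in> Rn k \<Longrightarrow> x \<in> cube k m (gidx k m x)"
proof -
  assume x: "x \<in> Rn k"
  have "real_of_int \<lfloor>x i * 2 ^ m\<rfloor> / 2 ^ m \<le> x i \<and> x i < (real_of_int \<lfloor>x i * 2 ^ m\<rfloor> + 1) / 2 ^ m" for i
  proof -
    have "real_of_int \<lfloor>x i * 2 ^ m\<rfloor> \<le> x i * 2 ^ m" "x i * 2 ^ m < real_of_int \<lfloor>x i * 2 ^ m\<rfloor> + 1"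
      by linarith+
    then show ?thesis by (simp add: field_simps)
  qed
  then show ?thesis using x unfolding cube_def gidx_def by auto
qed

lemma cube_close:
  assumes "x \<in> cube k m z" "y \<in> cube k m z" "i < k"
  shows "\<bar>y i - x i\<bar> < 1 / 2 ^ m"
proof -
  have "real_of_int (z i) / 2 ^ m \<le> x i" "x i < (real_of_int (z i) + 1) / 2 ^ m"
       "real_of_int (z i) / 2 ^ m \<le> y i" "y i < (real_of_int (z i) + 1) / 2 ^ m"
    using assms unfolding cube_def by auto
  moreover have "(real_of_int (z i) + 1) / 2 ^ m = real_of_int (z i) / 2 ^ m + 1 / 2 ^ m"
    by (simp add: add_divide_distrib)
  ultimately show ?thesis by (auto simp: abs_less_iff)
qed

lemma cube_idx:
  assumes "y \<in> cube k m z" "i < k"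
  shows "z i = \<lfloor>y i * 2 ^ m\<rfloor>"
proof -
  have "real_of_int (z i) / 2 ^ m \<le> y i" "y i < (real_of_int (z i) + 1) / 2 ^ m"
    using assms unfolding cube_def by auto
  then have "real_of_int (z i) \<le> y i * 2 ^ m" "y i * 2 ^ m < real_of_int (z i) + 1"
    by (simp_all add: field_simps)
  then show ?thesis by linarith
qed

lemma cube_disj:
  assumes "\<forall>i\<ge>k. z i = 0" "\<forall>i\<ge>k. z' i = 0" "z \<noteq> z'"
  shows "cube k m z \<inter> cube k m z' = {}"
proof (rule ccontr)
  assume "cube k m z \<inter> cube k m z' \<noteq> {}"
  then obtain y where y: "y \<in> cube k m z" "y \<in> cube k m z'" by blast
  have "z i = z' i" for i
  proof (cases "i < k")
    case True then show ?thesis using cube_idx[OF y(1) True] cube_idx[OF y(2) True] by simp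
  next
    case False then show ?thesis using assms(1,2) by simp
  qed
  then show False using assms(3) by auto
qed

lemma cube_PiE: "cube k m z = PiE {..<k} (\<lambda>i. {real_of_int (z i) / 2 ^ m ..< (real_of_int (z i) + 1) / 2 ^ m})"
  unfolding cube_def Rn_def by (auto simp: PiE_def Pi_def)

lemma cube_sets: "cube k m z \<in> sets (lebn k)"
  unfolding cube_PiE lebn_def by (rule sets_PiM_I_finite) auto

lemma emeasure_cube: "emeasure (lebn k) (cube k m z) = ennreal ((1 / 2 ^ m) ^ k)"
proof -
  interpret product_sigma_finite "\<lambda>_. lborel" by standard
  have "emeasure (lebn k) (cube k m z) =
      (\<Prod>i<k. emeasure lborel {real_of_int (z i) / 2 ^ m ..< (real_of_int (z i) + 1) / 2 ^ m})"
    unfolding cube_PiE lebn_def by (rule emeasure_PiM) auto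
  also have "\<dots> = (\<Prod>i<k. ennreal (1 / 2 ^ m))"
  proof (rule prod.cong)
    fix i
    have "(real_of_int (z i) + 1) / 2 ^ m - real_of_int (z i) / 2 ^ m = 1 / 2 ^ m"
      by (simp add: field_simps)
    moreover have "real_of_int (z i) / 2 ^ m \<le> (real_of_int (z i) + 1) / 2 ^ m"
      by (simp add: divide_right_mono)
    ultimately show "emeasure lborel {real_of_int (z i) / 2 ^ m ..< (real_of_int (z i) + 1) / 2 ^ m} = ennreal (1 / 2 ^ m)"
      by simp
  qed simp
  also have "\<dots> = ennreal ((1 / 2 ^ m) ^ k)" by (simp add: prod_ennreal ennreal_power)
  finally show ?thesis .
qed

lemma measure_cube: "measure (lebn k) (cube k m z) = (1 / 2 ^ m) ^ k"
  using emeasure_cube[of k m z] by (simp add: measure_def)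

lemma cube_point: "(\<lambda>i. if i < k then real_of_int (z i) / 2 ^ m else undefined) \<in> cube k m z"
  unfolding cube_def Rn_def by (auto simp: PiE_def extensional_def divide_right_mono intro!: divide_strict_right_mono)

lemma semialg_UN: "(\<And>t. t < N \<Longrightarrow> semialg k (A t)) \<Longrightarrow> semialg k (\<Union>t<(N::nat). A t)"
proof (induction N)
  case 0 then show ?case using semialg_empty by simp
next
  case (Suc N)
  have "(\<Union>t<Suc N. A t) = (\<Union>t<N. A t) \<union> A N" by (auto simp: lessThan_Suc)
  then show ?case using Suc by (simp add: semialg.un)
qed

lemma bopen_INT: "(\<And>t. t < N \<Longrightarrow> bopen k (A t)) \<Longrightarrow> bopen k (Rn k \<inter> (\<Inter>t<(N::nat). A t))"
proof (induction N)
  case 0 then show ?case using bopen_Rn by simp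
next
  case (Suc N)
  have "Rn k \<inter> (\<Inter>t<Suc N. A t) = (Rn k \<inter> (\<Inter>t<N. A t)) \<inter> A N" by (auto simp: lessThan_Suc)
  then show ?case using Suc by (simp add: bopen_Int)
qed

lemma bopen_compl_cbx: "bopen k (Rn k - cbx k l u)"
  unfolding bopen_def
proof
  fix x assume x: "x \<in> Rn k - cbx k l u"
  then obtain i where i: "i < k" "x i < l i \<or> u i < x i" unfolding cbx_def by auto
  show "\<exists>e>0. \<forall>y\<in>Rn k. (\<forall>i<k. \<bar>y i - x i\<bar> < e) \<longrightarrow> y \<in> Rn k - cbx k l u"
  proof (cases "x i < l i")
    case True
    show ?thesis
    proof (intro exI[of _ "l i - x i"] conjI ballI impI)
      show "l i - x i > 0" using True by simp
      fix y assume y: "y \<in> Rn k" "\<forall>j<k. \<bar>y j - x j\<bar> < l i - x i"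
      then have "y i < l i" using i(1) by (auto simp: abs_less_iff)
      then show "y \<in> Rn k - cbx k l u" using y(1) i(1) unfolding cbx_def by auto
    qed
  next
    case False
    then have F: "u i < x i" using i by simp
    show ?thesis
    proof (intro exI[of _ "x i - u i"] conjI ballI impI)
      show "x i - u i > 0" using F by simp
      fix y assume y: "y \<in> Rn k" "\<forall>j<k. \<bar>y j - x j\<bar> < x i - u i"
      then have "u i < y i" using i(1) by (auto simp: abs_less_iff)
      then show "y \<in> Rn k - cbx k l u" using y(1) i(1) unfolding cbx_def by auto
    qed
  qed
qed

lemma compact_diff_open:
  assumes "compact K" "K \<subseteq> Rn n" "A = Rn n \<inter> V" "open V"
  shows "compact (K - A)"
proof -
  have "K - A = K \<inter> (- V)" using assms(2,3) by auto
  then show ?thesis using assms(1,4) by (simp add: compact_Int_closed open_closed)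
qed

lemma grid_approx:
  assumes U: "bopen k U" "U \<subseteq> Rn k" "U \<in> sets (lebn k)"
    and bnd: "\<forall>x\<in>U. \<forall>i<k. \<bar>x i\<bar> \<le> real R"
    and fin: "emeasure (lebn k) U \<noteq> \<infinity>"
    and b: "0 \<le> b" "b < measure (lebn k) U"
  shows "\<exists>m Z. finite Z \<and> (\<forall>z\<in>Z. (\<forall>i\<ge>k. z i = 0) \<and> cube k m z \<subseteq> U) \<and> b < real (card Z) * (1 / 2 ^ m) ^ k"
proof -
  define Zs where "Zs m = {z. (\<forall>i\<ge>k. z i = 0) \<and> cube k m z \<subseteq> U}" for m
  define G where "G m = (\<Union>z\<in>Zs m. cube k m z)" for m
  have finZ: "finite (Zs m)" for m
  proof -
    define M :: int where "M = \<lceil>real R * 2 ^ m\<rceil>"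
    have "Zs m \<subseteq> {f. \<forall>x. (x \<in> {..<k} \<longrightarrow> f x \<in> {-M..M}) \<and> (x \<notin> {..<k} \<longrightarrow> f x = 0)}"
    proof
      fix z assume z: "z \<in> Zs m"
      have "z i \<in> {-M..M}" if i: "i < k" for i
      proof -
        have "(\<lambda>i. if i < k then real_of_int (z i) / 2 ^ m else undefined) \<in> U"
          using cube_point[of k z m] z unfolding Zs_def by blast
        then have "\<bar>real_of_int (z i) / 2 ^ m\<bar> \<le> real R" using bnd i by fastforce
        then have "\<bar>real_of_int (z i)\<bar> \<le> real R * 2 ^ m" by (simp add: field_simps)
        then have "\<bar>real_of_int (z i)\<bar> \<le> real_of_int M" unfolding M_def by linarith
        then show ?thesis by (simp add: abs_le_iff)
      qed
      then show "z \<in> {f. \<forall>x. (x \<in> {..<k} \<longrightarrow> f x \<in> {-M..M}) \<and> (x \<notin> {..<k} \<longrightarrow> f x = 0)}"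
        using z unfolding Zs_def by auto
    qed
    moreover have "finite {f. \<forall>x. (x \<in> {..<k} \<longrightarrow> f x \<in> {-M..M}) \<and> (x \<notin> {..<k} \<longrightarrow> f x = (0::int))}"
      by (rule finite_set_of_finite_funs) auto
    ultimately show ?thesis by (rule finite_subset)
  qed
  have disj: "disjoint_family_on (cube k m) (Zs m)" for m
    unfolding disjoint_family_on_def Zs_def using cube_disj by blast
  have Gs: "G m \<in> sets (lebn k)" for m
    unfolding G_def using finZ cube_sets by (intro sets.finite_UN) auto
  have eG: "emeasure (lebn k) (G m) = ennreal (real (card (Zs m)) * (1 / 2 ^ m) ^ k)" for m
  proof -
    have "emeasure (lebn k) (G m) = (\<Sum>z\<in>Zs m. emeasure (lebn k) (cube k m z))"
      unfolding G_def using finZ disj cube_sets by (intro sum_emeasure[symmetric]) auto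
    also have "\<dots> = (\<Sum>z\<in>Zs m. ennreal ((1 / 2 ^ m) ^ k))" by (simp add: emeasure_cube)
    also have "\<dots> = ennreal (real (card (Zs m)) * (1 / 2 ^ m) ^ k)"
      by (simp add: ennreal_mult' ennreal_of_nat_eq_real_of_nat)
    finally show ?thesis .
  qed
  have ev: "eventually (\<lambda>m. x \<in> G m) sequentially" if x: "x \<in> U" for x
  proof -
    obtain e where e: "e > 0" "\<forall>y\<in>Rn k. (\<forall>i<k. \<bar>y i - x i\<bar> < e) \<longrightarrow> y \<in> U"
      using U(1) x unfolding bopen_def by blast
    obtain m0 where m0: "(1 / 2) ^ m0 < e" using real_arch_pow_inv[OF e(1), of "1/2"] by auto
    have "x \<in> G m" if m: "m \<ge> m0" for m
    proof -
      have xR: "x \<in> Rn k" using x U(2) by auto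
      have sm: "1 / 2 ^ m \<le> (1 / 2 :: real) ^ m0"
        using m by (simp add: power_one_over[symmetric] power_decreasing)
      have "cube k m (gidx k m x) \<subseteq> U"
      proof
        fix y assume y: "y \<in> cube k m (gidx k m x)"
        have "\<forall>i<k. \<bar>y i - x i\<bar> < e"
          using cube_close[OF cube_mem[OF xR] y] sm m0 by fastforce
        moreover have "y \<in> Rn k" using y unfolding cube_def by auto
        ultimately show "y \<in> U" using e(2) by blast
      qed
      then have "gidx k m x \<in> Zs m" unfolding Zs_def gidx_def by auto
      then show ?thesis unfolding G_def using cube_mem[OF xR] by blast
    qed
    then show ?thesis unfolding eventually_sequentially by blast
  qed
  have "emeasure (lebn k) U = (\<integral>\<^sup>+ x. indicator U x \<partial>lebn k)" using U(3) by simp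
  also have "\<dots> \<le> (\<integral>\<^sup>+ x. liminf (\<lambda>m. indicator (G m) x) \<partial>lebn k)"
  proof (rule nn_integral_mono)
    fix x
    show "indicator U x \<le> liminf (\<lambda>m. indicator (G m) x :: ennreal)"
    proof (cases "x \<in> U")
      case True
      have "eventually (\<lambda>m. 1 \<le> (indicator (G m) x :: ennreal)) sequentially"
        using ev[OF True] by (rule eventually_mono) simp
      then have "1 \<le> liminf (\<lambda>m. indicator (G m) x :: ennreal)" by (rule Liminf_bounded)
      then show ?thesis using True by simp
    qed simp
  qed
  also have "\<dots> \<le> liminf (\<lambda>m. \<integral>\<^sup>+ x. indicator (G m) x \<partial>lebn k)"
    by (rule nn_integral_liminf) (use Gs in auto)
  also have "\<dots> = liminf (\<lambda>m. emeasure (lebn k) (G m))"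
    using Gs by simp
  finally have le: "emeasure (lebn k) U \<le> liminf (\<lambda>m. emeasure (lebn k) (G m))" .
  have "ennreal b < emeasure (lebn k) U"
    using b fin by (simp add: emeasure_eq_ennreal_measure ennreal_less_iff)
  then have "ennreal b < liminf (\<lambda>m. emeasure (lebn k) (G m))" using le by (rule less_le_trans)
  then have "eventually (\<lambda>m. ennreal b < emeasure (lebn k) (G m)) sequentially" by (rule less_LiminfD)
  then obtain m where "ennreal b < emeasure (lebn k) (G m)" by (auto simp: eventually_sequentially)
  then have "b < real (card (Zs m)) * (1 / 2 ^ m) ^ k" using b(1) by (simp add: eG ennreal_less_iff)
  then show ?thesis using finZ unfolding Zs_def by blast
qed

lemma obox_sub_cbx: "obox k l u \<subseteq> cbx k l u"
  unfolding obox_def cbx_def by auto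

lemma op_sub:
  assumes K: "K \<in> SA k" "compact K" and k: "k > 0"
    and b: "algebraic b" "0 < b" "b < measure (lebn k) K"
  shows "wit k (measure (lebn k) K - b)"
proof -
  from compact_bounded_Rn[OF K(2), of k]
  obtain R :: nat where R: "real R \<ge> 1" "\<forall>x\<in>K. \<forall>i<k. \<bar>x i\<bar> \<le> real R"
    by (elim exE conjE) (rule that)
  have KR: "K \<subseteq> Rn k" by (rule SA_sub[OF K(1)])
  have Ks: "K \<in> sets (lebn k)" by (rule SA_sets[OF K(1)])
  have Ksa: "semialg k K" using K(1) unfolding SA_def by auto
  obtain U where U: "semialg k U" "U \<subseteq> K" "bopen k U" "K - U \<in> null_sets (lebn k)"
    using open_core[OF Ksa] by blast
  have mU: "measure (lebn k) U = measure (lebn k) K" by (rule measure_core[OF Ks U(2) U(4)])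
  have UR: "U \<subseteq> Rn k" using U(2) KR by auto
  have Us: "U \<in> sets (lebn k)" by (rule semialg_sets[OF U(1)])
  have finK: "emeasure (lebn k) K \<noteq> \<infinity>" by (rule emeasure_bounded_finite[OF Ks R(2) KR])
  have bndU: "\<forall>x\<in>U. \<forall>i<k. \<bar>x i\<bar> \<le> real R" using R(2) U(2) by blast
  have finU: "emeasure (lebn k) U \<noteq> \<infinity>" by (rule emeasure_bounded_finite[OF Us bndU UR])
  obtain m Z where Z: "finite Z" "\<forall>z\<in>Z. (\<forall>i\<ge>k. z i = 0) \<and> cube k m z \<subseteq> U"
      "b < real (card Z) * (1 / 2 ^ m) ^ k"
    using grid_approx[OF U(3) UR Us bndU finU, of b] b mU by auto
  define h :: real where "h = 1 / 2 ^ m"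
  define s where "s = h ^ k"
  have hpos: "h > 0" unfolding h_def by simp
  have spos: "s > 0" unfolding s_def using hpos by simp
  have sh: "s = h * h ^ (k - 1)" unfolding s_def using k by (metis Suc_diff_1 power_Suc)
  define j where "j = nat \<lfloor>b / s\<rfloor>"
  have j1: "real j * s \<le> b" and j2: "b < (real j + 1) * s"
  proof -
    have "0 \<le> b / s" using b spos by simp
    then have rj: "real j = real_of_int \<lfloor>b / s\<rfloor>" unfolding j_def by simp
    have f1: "real_of_int \<lfloor>b / s\<rfloor> \<le> b / s" and f2: "b / s < real_of_int \<lfloor>b / s\<rfloor> + 1" by linarith+
    have "real_of_int \<lfloor>b / s\<rfloor> * s \<le> b / s * s" by (rule mult_right_mono[OF f1]) (use spos in simp)
    then have "real_of_int \<lfloor>b / s\<rfloor> * s \<le> b" using spos by simp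
    moreover have "b / s * s < (real_of_int \<lfloor>b / s\<rfloor> + 1) * s" by (rule mult_strict_right_mono[OF f2 spos])
    then have "b < (real_of_int \<lfloor>b / s\<rfloor> + 1) * s" using spos by simp
    ultimately have "real_of_int \<lfloor>b / s\<rfloor> * s \<le> b" "b < (real_of_int \<lfloor>b / s\<rfloor> + 1) * s" by auto
    then show "real j * s \<le> b" "b < (real j + 1) * s" unfolding rj by simp_all
  qed
  have jN: "j < card Z"
  proof -
    have "real j * s < real (card Z) * s" using j1 Z(3) unfolding s_def h_def by linarith
    then show ?thesis using spos by simp
  qed
  obtain zl where zl: "set zl = Z" "distinct zl" using finite_distinct_list[OF Z(1)] by blast
  have lenzl: "length zl = card Z" using zl by (metis distinct_card)
  have zlZ: "zl ! t \<in> Z" if "t < Suc j" for t using that jN lenzl zl(1) by (metis less_Suc_eq_le le_less_trans nth_mem)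
  define r where "r = b - real j * s"
  have r: "0 \<le> r" "r < s" unfolding r_def using j1 j2 by (auto simp: field_simps)
  define ell where "ell = r / h ^ (k - 1)"
  have ell: "0 \<le> ell" "ell < h" unfolding ell_def using r hpos sh by (auto simp: field_simps)
  define lo where "lo t = (\<lambda>i. real_of_int ((zl ! t) i) / 2 ^ m)" for t
  define hi where "hi t = (\<lambda>i. if t = j \<and> i = 0 then real_of_int ((zl ! t) i) / 2 ^ m + ell
                    else (real_of_int ((zl ! t) i) + 1) / 2 ^ m)" for t
  have hi_eq: "(real_of_int ((zl ! t) i) + 1) / 2 ^ m = lo t i + h" for t i
    unfolding lo_def h_def by (simp add: add_divide_distrib)
  have lohi: "lo t i \<le> hi t i" for t i using ell hpos hi_eq unfolding hi_def lo_def by auto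
  have hi_le: "hi t i \<le> lo t i + h" for t i using ell hi_eq unfolding hi_def lo_def by auto
  define bx where "bx t = obox k (lo t) (hi t)" for t
  define cb where "cb t = cbx k (lo t) (hi t)" for t
  define Rm where "Rm = (\<Union>t<Suc j. bx t)"
  define C where "C = (\<Union>t<Suc j. cb t)"
  have bx_cube: "bx t \<subseteq> cube k m (zl ! t)" for t
  proof
    fix y assume y: "y \<in> bx t"
    have "\<forall>i<k. real_of_int ((zl ! t) i) / 2 ^ m \<le> y i \<and> y i < (real_of_int ((zl ! t) i) + 1) / 2 ^ m"
    proof (intro allI impI)
      fix i assume i: "i < k"
      have "lo t i < y i" "y i < hi t i" using y i unfolding bx_def obox_def by auto
      then show "real_of_int ((zl ! t) i) / 2 ^ m \<le> y i \<and> y i < (real_of_int ((zl ! t) i) + 1) / 2 ^ m"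
        using hi_le[of t i] hi_eq[of t i] unfolding lo_def by auto
    qed
    then show "y \<in> cube k m (zl ! t)" using y unfolding bx_def obox_def cube_def by auto
  qed
  have bxU: "bx t \<subseteq> U" if "t < Suc j" for t using bx_cube[of t] Z(2) zlZ[OF that] by blast
  have RmK: "Rm \<subseteq> K" unfolding Rm_def using bxU U(2) by blast
  have prod_bx: "(\<Prod>i<k. hi t i - lo t i) = (if t = j then r else s)" for t
  proof (cases "t = j")
    case True
    have "(\<Prod>i<k. hi t i - lo t i) = (hi t 0 - lo t 0) * (\<Prod>i<k - 1. hi t (Suc i) - lo t (Suc i))"
      using k by (rule prod_first)
    also have "\<dots> = ell * h ^ (k - 1)" using True hi_eq unfolding hi_def by (simp add: lo_def)
    also have "\<dots> = r" unfolding ell_def using hpos by simp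
    finally show ?thesis using True by simp
  next
    case False
    then have "(\<Prod>i<k. hi t i - lo t i) = (\<Prod>i<k. h)"
      using hi_eq unfolding hi_def by (intro prod.cong) (auto simp: lo_def)
    then show ?thesis using False unfolding s_def by simp
  qed
  have mbx: "measure (lebn k) (bx t) = (if t = j then r else s)" for t
    unfolding bx_def using measure_obox[of k "lo t" "hi t"] lohi prod_bx by simp
  have mcb: "measure (lebn k) (cb t) = (if t = j then r else s)" for t
    unfolding cb_def using measure_cbx[of k "lo t" "hi t"] lohi prod_bx by simp
  have ebx: "emeasure (lebn k) (bx t) \<noteq> \<infinity>" for t
    unfolding bx_def using emeasure_obox[of k "lo t" "hi t"] lohi by simp
  have disj: "disjoint_family_on bx {..<Suc j}"
    unfolding disjoint_family_on_def
  proof (intro ballI impI)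
    fix t t' assume t: "t \<in> {..<Suc j}" "t' \<in> {..<Suc j}" "t \<noteq> t'"
    have "t < length zl" "t' < length zl" using t jN lenzl by auto
    then have "zl ! t \<noteq> zl ! t'" using zl(2) t(3) by (simp add: nth_eq_iff_index_eq)
    then have "cube k m (zl ! t) \<inter> cube k m (zl ! t') = {}"
      using Z(2) zlZ t by (intro cube_disj) auto
    then show "bx t \<inter> bx t' = {}" using bx_cube[of t] bx_cube[of t'] by blast
  qed
  have mRm: "measure (lebn k) Rm = b"
  proof -
    have "measure (lebn k) Rm = (\<Sum>t<Suc j. measure (lebn k) (bx t))"
      unfolding Rm_def
    proof (rule measure_finite_Union)
      show "finite {..<Suc j}" by simp
      show "bx ` {..<Suc j} \<subseteq> sets (lebn k)" by (auto simp: bx_def obox_sets)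
      show "disjoint_family_on bx {..<Suc j}" by (rule disj)
      show "\<And>i. i \<in> {..<Suc j} \<Longrightarrow> emeasure (lebn k) (bx i) \<noteq> \<infinity>" using ebx by auto
    qed
    also have "\<dots> = (\<Sum>t<j. s) + r" by (simp add: mbx)
    also have "\<dots> = b" unfolding r_def by simp
    finally show ?thesis .
  qed
  have Rms: "Rm \<in> sets (lebn k)" unfolding Rm_def bx_def by (intro sets.finite_UN) (auto simp: obox_sets)
  have hQ: "h \<in> \<rat>" unfolding h_def by simp
  have alg: "algebraic (lo t i) \<and> algebraic (hi t i)" for t i
  proof -
    have a1: "algebraic (lo t i)" unfolding lo_def by (rule rat_alg) simp
    have a2: "algebraic ((real_of_int ((zl ! t) i) + 1) / 2 ^ m)" by (rule rat_alg) simp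
    have "algebraic (real_of_int ((zl ! t) i) / 2 ^ m + ell)"
    proof -
      have "real_of_int ((zl ! t) i) / 2 ^ m + ell =
          (1 / h ^ (k - 1)) * b + (real_of_int ((zl ! t) i) / 2 ^ m - real j * s / h ^ (k - 1))"
        unfolding ell_def r_def using hpos by (simp add: field_simps)
      also have "algebraic \<dots>" using hQ unfolding s_def by (intro algebraic_affine b(1)) auto
      finally show ?thesis .
    qed
    then show ?thesis using a1 a2 unfolding hi_def by auto
  qed
  define K' where "K' = K - Rm"
  have K's: "semialg k K'" unfolding K'_def Rm_def bx_def
    by (intro semialg_diff Ksa semialg_UN semialg_obox alg)
  have K'c: "compact K'"
  proof -
    define V where "V = (\<Union>t<Suc j. {x :: nat \<Rightarrow> real. \<forall>i<k. lo t i < x i \<and> x i < hi t i})"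
    have "open V" unfolding V_def by (intro open_UN ballI open_box_set)
    moreover have "Rm = Rn k \<inter> V" unfolding Rm_def V_def bx_def obox_def by auto
    ultimately show ?thesis unfolding K'_def using compact_diff_open[OF K(2) KR] by blast
  qed
  have mK': "measure (lebn k) K' = measure (lebn k) K - b"
    unfolding K'_def using measure_Diff[OF finK Ks Rms RmK] mRm by simp
  have ne: "nonempty_interior k K'"
  proof -
    define W where "W = U \<inter> (Rn k \<inter> (\<Inter>t<Suc j. Rn k - cb t))"
    have bW: "bopen k W" unfolding W_def cb_def
      by (intro bopen_Int U(3) bopen_INT bopen_compl_cbx)
    have WK': "W \<subseteq> K'"
    proof
      fix y assume y: "y \<in> W"
      then have "y \<in> K" using U(2) unfolding W_def by auto
      moreover have "y \<notin> Rm"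
      proof
        assume "y \<in> Rm"
        then obtain t where t: "t < Suc j" "y \<in> bx t" unfolding Rm_def by auto
        then have "y \<in> cb t" unfolding bx_def cb_def using obox_sub_cbx by blast
        moreover have "y \<in> Rn k - cb t" using y t(1) unfolding W_def by blast
        ultimately show False by blast
      qed
      ultimately show "y \<in> K'" unfolding K'_def by auto
    qed
    have "W \<noteq> {}"
    proof
      assume W0: "W = {}"
      have UC: "U \<subseteq> C"
      proof
        fix x assume x: "x \<in> U"
        show "x \<in> C"
        proof (rule ccontr)
          assume "x \<notin> C"
          then have "x \<in> W" using x UR unfolding W_def C_def by auto
          then show False using W0 by simp
        qed
      qed
      have Cs: "C \<in> sets (lebn k)" unfolding C_def cb_def by (intro sets.finite_UN) (auto simp: cbx_sets)
      have bndC: "\<forall>x\<in>C. \<forall>i<k. \<bar>x i\<bar> \<le> real R + 1"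
      proof (intro ballI allI impI)
        fix x i assume x: "x \<in> C" and i: "i < k"
        then obtain t where t: "t < Suc j" "x \<in> cb t" unfolding C_def by auto
        have "lo t i \<le> x i" "x i \<le> hi t i" using t(2) i unfolding cb_def cbx_def by auto
        moreover have "(\<lambda>i. if i < k then real_of_int ((zl ! t) i) / 2 ^ m else undefined) \<in> U"
          using cube_point[of k "zl ! t" m] Z(2) zlZ[OF t(1)] by blast
        then have "\<bar>lo t i\<bar> \<le> real R" using bndU i unfolding lo_def by fastforce
        moreover have "h \<le> 1" unfolding h_def by simp
        ultimately show "\<bar>x i\<bar> \<le> real R + 1" using hi_le[of t i] by (auto simp: abs_le_iff)
      qed
      have CR: "C \<subseteq> Rn k" unfolding C_def cb_def cbx_def by auto
      have finC: "emeasure (lebn k) C \<noteq> \<infinity>" by (rule emeasure_bounded_finite[OF Cs bndC CR])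
      have "measure (lebn k) U \<le> measure (lebn k) C"
        using UC Us Cs finC by (intro measure_mono_fmeasurable) (auto simp: fmeasurable_def less_top)
      also have "\<dots> \<le> (\<Sum>t<Suc j. measure (lebn k) (cb t))"
        unfolding C_def cb_def by (intro measure_UNION_le) (auto simp: cbx_sets)
      also have "\<dots> = b" by (simp add: mcb r_def)
      finally show False using mU b(3) by simp
    qed
    then obtain x where x: "x \<in> W" by blast
    then obtain e where e: "e > 0" "\<forall>y\<in>Rn k. (\<forall>i<k. \<bar>y i - x i\<bar> < e) \<longrightarrow> y \<in> W"
      using bW unfolding bopen_def by blast
    show ?thesis unfolding nonempty_interior_def
      using x e WK' by (intro bexI[of _ x] exI[of _ e]) auto
  qed
  show ?thesis unfolding wit_def SA_def using K's K'c mK' ne by auto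
qed

lemma wit_SA: "wit k v \<Longrightarrow> \<exists>K. K \<in> SA k \<and> compact K \<and> v = measure (lebn k) K"
  unfolding wit_def by blast

lemma shift_add:
  assumes "k > 0" "wit k v" "algebraic c" "v + c > 0"
  shows "wit k (v + c)"
proof -
  obtain K where K: "K \<in> SA k" "compact K" "v = measure (lebn k) K" using wit_SA[OF assms(2)] by blast
  consider "c > 0" | "c = 0" | "c < 0" by linarith
  then show ?thesis
  proof cases
    case 1 then show ?thesis using op_add[OF K(1,2) assms(1) assms(3)] K(3) by simp
  next
    case 2 then show ?thesis using assms(2) by simp
  next
    case 3
    have "wit k (measure (lebn k) K - (- c))"
      using 3 assms(4) K(3) by (intro op_sub[OF K(1,2) assms(1)]) (auto simp: assms(3))
    then show ?thesis using K(3) by simp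
  qed
qed

lemma shift_comp:
  assumes "k > 0" "wit k v" "algebraic c" "c - v > 0"
  shows "wit k (c - v)"
proof -
  obtain K where K: "K \<in> SA k" "compact K" "v = measure (lebn k) K" using wit_SA[OF assms(2)] by blast
  obtain N0 :: nat where N0: "\<forall>N\<ge>N0. wit k (real N - measure (lebn k) K)"
    using op_comp[OF K(1,2) assms(1)] by blast
  define N where "N = max N0 (nat \<lceil>c\<rceil> + 1)"
  have "wit k (real N - v)" using N0 K(3) unfolding N_def by simp
  then obtain K' where K': "K' \<in> SA k" "compact K'" "real N - v = measure (lebn k) K'"
    using wit_SA by blast
  have Nc: "real N > c"
  proof -
    have "real N \<ge> real (nat \<lceil>c\<rceil> + 1)" unfolding N_def by simp
    moreover have "real (nat \<lceil>c\<rceil> + 1) > c" by linarith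
    ultimately show ?thesis by linarith
  qed
  have "wit k (measure (lebn k) K' - (real N - c))"
  proof (rule op_sub[OF K'(1,2) assms(1)])
    show "algebraic (real N - c)" by (rule algebraic_rat_sub[OF assms(3)]) simp
    show "0 < real N - c" using Nc by simp
    show "real N - c < measure (lebn k) K'" using K'(3) assms(4) by linarith
  qed
  moreover have "measure (lebn k) K' - (real N - c) = c - v" using K'(3) by linarith
  ultimately show ?thesis by simp
qed

lemma transfer:
  assumes a: "algebraic a" and x: "x \<noteq> 0" "a - x \<noteq> 0" and k: "k > 0" and w: "wit k \<bar>x\<bar>"
  shows "wit k \<bar>a - x\<bar>"
proof (cases "x > 0")
  case True
  then have w': "wit k x" using w by simp
  show ?thesis
  proof (cases "a - x > 0")
    case True
    then show ?thesis using shift_comp[OF k w' a] by simp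
  next
    case False
    then have "\<bar>a - x\<bar> = x + (- a)" using x by linarith
    moreover have "wit k (x + (- a))" using False x by (intro shift_add[OF k w']) (auto simp: a)
    ultimately show ?thesis by simp
  qed
next
  case False
  then have xn: "x < 0" using x by linarith
  then have w': "wit k (- x)" using w by simp
  show ?thesis
  proof (cases "a - x > 0")
    case True
    then have "\<bar>a - x\<bar> = - x + a" by linarith
    moreover have "wit k (- x + a)" using True by (intro shift_add[OF k w' a]) linarith
    ultimately show ?thesis by simp
  next
    case False
    then have "\<bar>a - x\<bar> = (- a) - (- x)" using x by linarith
    moreover have "wit k ((- a) - (- x))" using False x by (intro shift_comp[OF k w']) (auto simp: a)
    ultimately show ?thesis by simp
  qed
qed

theorem mainTheorem8:
  fixes p1 p2 :: real
  assumes "p1 \<in> PKZ" and "p2 \<in> PKZ"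
    and "\<not> algebraic p1" and "\<not> algebraic p2"
    and "period_deg p1 \<noteq> period_deg p2"
  shows "\<not> algebraic (p1 + p2)"
proof
  assume alg: "algebraic (p1 + p2)"
  define a where "a = p1 + p2"
  have a: "algebraic a" using alg unfolding a_def .
  have p1: "p1 \<noteq> 0" using assms(3) by auto
  have p2: "p2 \<noteq> 0" using assms(4) by auto
  have e2: "p2 = a - p1" and e1: "p1 = a - p2" unfolding a_def by simp_all
  have iff: "(k > 0 \<and> (\<exists>K. K \<in> SA k \<and> compact K \<and> \<bar>p1\<bar> = measure (lebn k) K)) \<longleftrightarrow>
             (k > 0 \<and> (\<exists>K. K \<in> SA k \<and> compact K \<and> \<bar>p2\<bar> = measure (lebn k) K))" for k
  proof -
    have "k > 0 \<Longrightarrow> wit k \<bar>p1\<bar> \<Longrightarrow> wit k \<bar>p2\<bar>"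
      using transfer[OF a p1, of k] p2 e2 by simp
    moreover have "k > 0 \<Longrightarrow> wit k \<bar>p2\<bar> \<Longrightarrow> wit k \<bar>p1\<bar>"
      using transfer[OF a p2, of k] p1 e1 by simp
    ultimately show ?thesis unfolding wit_def by blast
  qed
  have "period_deg p1 = period_deg p2"
    unfolding period_deg_def using p1 p2 iff by simp
  then show False using assms(5) by simp
qed

end
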